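(* Let $n\ge1$, $K=U(n)$ acting on $\mathcal{O}_\Lambda$ via $k\mapsto\mathrm{diag}(1,k)$, let $\mathrm{M}=\mathrm{diag}(\mu_1,\dots,\mu_n)$ with $\mu_1\ge\dots\ge\mu_n$, and let $p\in\mathcal{O}_\Lambda$ with $\Phi(p)=\mathrm{M}$, so that $p=\begin{pmatrix}c&\mathbf{z}^\dagger\\ \mathbf{z}&\mathrm{M}\end{pmatrix}$ with $\mathbf{z}\in\mathbb{C}^n$ (a column vector) and $c=\sum_{i=1}^{n+1}\lambda_i-\sum_{i=1}^n\mu_i$. Then $T_p(K\cdot p)^\omega$ (the $\omega_\Lambda$-orthogonal complement of the tangent space to the $K$-orbit in $T_p\mathcal{O}_\Lambda$) consists of exactly the matrices $$\begin{pmatrix}0&\mathbf{v}^\dagger\\ \mathbf{v}&0\end{pmatrix},\qquad \mathbf{v}=(c-\mathrm{M})\mathbf{x}+X\mathbf{z},$$ where $X\in\mathfrak{u}(n)$ and $\mathbf{x}\in\mathbb{C}^n$ range over those pairs satisfying $$0=\mathbf{x}^\dagger\mathbf{z}+\mathbf{z}^\dagger\mathbf{x},\qquad 0=\mathbf{x}\mathbf{z}^\dagger+\mathbf{z}\mathbf{x}^\dagger+[X,\mathrm{M}].$$ Moreover, $T_p(K\cdot p)\cap T_p(K\cdot p)^\omega$ consists of exactly the matrices $\begin{pmatrix}0&(Y\mathbf{z})^\dagger\\ Y\mathbf{z}&0\end{pmatrix}$ with $Y\in\mathfrak{k}_{\mathrm{M}}$.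
   Context: $\mathcal{H}_m$ denotes $m\times m$ Hermitian matrices, $\mathfrak{u}(n)$ skew-Hermitian matrices, $\dagger$ conjugate transpose. For a non-increasing real sequence $\lambda_1\ge\dots\ge\lambda_{n+1}$, $\mathcal{O}_\Lambda\subset\mathcal{H}_{n+1}$ is the set of Hermitian matrices with eigenvalues $\lambda_1,\dots,\lambda_{n+1}$, with symplectic form $(\omega_\Lambda)_p([X,p],[Y,p])=\frac{1}{\sqrt{-1}}\mathrm{Tr}(p[X,Y])$ for $X,Y\in\mathfrak{u}(n+1)$. $K=U(n)$ acts by $k\cdot p=\mathrm{diag}(1,k)\,p\,\mathrm{diag}(1,k)^\dagger$ with moment map $\Phi(p)=$ the bottom-right $n\times n$ principal submatrix of $p$ (using $\mathcal{H}_n\cong\mathfrak{u}(n)^*$, $X\mapsto(A\mapsto\frac{1}{\sqrt{-1}}\mathrm{Tr}(XA))$). $\mathfrak{k}=\mathfrak{u}(n)$ and $\mathfrak{k}_{\mathrm{M}}=\{Y\in\mathfrak{u}(n):[Y,\mathrm{M}]=0\}$. *)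

theory Defs
  imports "Jordan_Normal_Form.Schur_Decomposition" "Jordan_Normal_Form.Char_Poly"
begin

text \<open>Complex matrices are Jordan_Normal_Form matrices of type complex mat;
column vectors in C^n are n x 1 matrices. The conjugate transpose is mat_adjoint.\<close>

definition mtrace :: "complex mat \<Rightarrow> complex" where
  "mtrace A = (\<Sum>i<dim_row A. A $$ (i, i))"

definition commutator :: "complex mat \<Rightarrow> complex mat \<Rightarrow> complex mat" where
  "commutator X Y = X * Y - Y * X"

definition hermitian_mats :: "nat \<Rightarrow> complex mat set" where
  "hermitian_mats m = {A \<in> carrier_mat m m. mat_adjoint A = A}"

definition unitary_lie :: "nat \<Rightarrow> complex mat set" where
  "unitary_lie m = {X \<in> carrier_mat m m. mat_adjoint X = - X}"

text \<open>The coadjoint orbit O_Lambda in H_(n+1): Hermitian matrices whose eigenvalues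
  (with multiplicity) are lam 0, ..., lam n, i.e. whose characteristic polynomial is
  the product of the linear factors (x - lam i).\<close>
definition orbit_O :: "nat \<Rightarrow> (nat \<Rightarrow> real) \<Rightarrow> complex mat set" where
  "orbit_O n lam = {A \<in> hermitian_mats (n + 1).
      char_poly A = (\<Prod>i<n + 1. [: - complex_of_real (lam i), 1 :])}"

definition tangent_O :: "nat \<Rightarrow> complex mat \<Rightarrow> complex mat set" where
  "tangent_O n p = {commutator X p | X. X \<in> unitary_lie (n + 1)}"

text \<open>The embedding k |-> diag(1,k) of U(n) in U(n+1) has differential Y |-> diag(0,Y).\<close>
definition embed0 :: "nat \<Rightarrow> complex mat \<Rightarrow> complex mat" where
  "embed0 n Y = four_block_mat (0\<^sub>m 1 1) (0\<^sub>m 1 n) (0\<^sub>m n 1) Y"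

definition tangent_Korbit :: "nat \<Rightarrow> complex mat \<Rightarrow> complex mat set" where
  "tangent_Korbit n p = {commutator (embed0 n Y) p | Y. Y \<in> unitary_lie n}"

text \<open>The KKS form: omega_p([X,p],[Y,p]) = (1/i) Tr(p[X,Y]).\<close>
definition omega_rep :: "complex mat \<Rightarrow> complex mat \<Rightarrow> complex mat \<Rightarrow> complex" where
  "omega_rep p X Y = mtrace (p * commutator X Y) / \<i>"

text \<open>omega-orthogonal complement of a subspace W of T_p O_Lambda (inside T_p O_Lambda):
  A such that omega_p(A,B) = 0 for all B in W, evaluated through (arbitrary)
  representatives A = [X,p], B = [Y,p] with X, Y in u(n+1).\<close>
definition omega_orth :: "nat \<Rightarrow> complex mat \<Rightarrow> complex mat set \<Rightarrow> complex mat set" where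
  "omega_orth n p W = {A \<in> tangent_O n p. \<forall>B \<in> W. \<forall>X \<in> unitary_lie (n + 1).
      \<forall>Y \<in> unitary_lie (n + 1). A = commutator X p \<longrightarrow> B = commutator Y p \<longrightarrow>
        omega_rep p X Y = 0}"

definition moment :: "nat \<Rightarrow> complex mat \<Rightarrow> complex mat" where
  "moment n p = mat n n (\<lambda>(i, j). p $$ (i + 1, j + 1))"

definition diag_of :: "nat \<Rightarrow> (nat \<Rightarrow> real) \<Rightarrow> complex mat" where
  "diag_of n mu = mat n n (\<lambda>(i, j). if i = j then complex_of_real (mu i) else 0)"

definition offdiag_block :: "nat \<Rightarrow> complex mat \<Rightarrow> complex mat" where
  "offdiag_block n v = four_block_mat (0\<^sub>m 1 1) (mat_adjoint v) v (0\<^sub>m n n)"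

end

theory Submission
  imports Defs
begin
lemma adj_dims[simp]: "dim_row (mat_adjoint A) = dim_col A" "dim_col (mat_adjoint A) = dim_row A"
  unfolding mat_adjoint_def by auto
lemma adj_index[simp]: "i < dim_col A \<Longrightarrow> j < dim_row A \<Longrightarrow> mat_adjoint A $$ (i,j) = conjugate (A $$ (j,i))"
  unfolding mat_adjoint_def by (auto simp: mat_of_rows_def)
lemma adj_carrier[simp]: "A \<in> carrier_mat m k \<Longrightarrow> mat_adjoint A \<in> carrier_mat k m"
  by auto

lemma mtrace_sum: "A \<in> carrier_mat m m \<Longrightarrow> mtrace A = (\<Sum>i<m. A $$ (i,i))"
  unfolding mtrace_def by auto

lemma mtrace_mult_comm:
  assumes A: "A \<in> carrier_mat m k" and B: "B \<in> carrier_mat k m"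
  shows "mtrace (A * B) = mtrace (B * A)"
proof -
  have "mtrace (A * B) = (\<Sum>i<m. \<Sum>j<k. A $$ (i,j) * B $$ (j,i))"
    using A B by (simp add: mtrace_def scalar_prod_def atLeast0LessThan)
  also have "\<dots> = (\<Sum>j<k. \<Sum>i<m. B $$ (j,i) * A $$ (i,j))"
    by (subst sum.swap) (simp add: mult.commute)
  also have "\<dots> = mtrace (B * A)"
    using A B by (simp add: mtrace_def scalar_prod_def atLeast0LessThan)
  finally show ?thesis .
qed

lemma mtrace_add: "A \<in> carrier_mat m m \<Longrightarrow> B \<in> carrier_mat m m \<Longrightarrow> mtrace (A + B) = mtrace A + mtrace B"
  by (simp add: mtrace_def sum.distrib)
lemma mtrace_minus: "A \<in> carrier_mat m m \<Longrightarrow> B \<in> carrier_mat m m \<Longrightarrow> mtrace (A - B) = mtrace A - mtrace B"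
  by (simp add: mtrace_def sum_subtractf)

lemma lin_prod_coeff:
  fixes xs :: "'a::comm_ring_1 list"
  shows "coeff (\<Prod>a\<leftarrow>xs. [:- a, 1:]) (length xs) = 1 \<and>
         (\<forall>k > length xs. coeff (\<Prod>a\<leftarrow>xs. [:- a, 1:]) k = 0) \<and>
         (xs \<noteq> [] \<longrightarrow> coeff (\<Prod>a\<leftarrow>xs. [:- a, 1:]) (length xs - 1) = - sum_list xs)"
proof (induction xs)
  case Nil
  then show ?case by (simp add: coeff_1)
next
  case (Cons x xs)
  let ?Q = "(\<Prod>a\<leftarrow>xs. [:- a, 1:])"
  have eq: "(\<Prod>a\<leftarrow>x#xs. [:- a, 1:]) = smult (- x) ?Q + pCons 0 ?Q"
    by (simp add: mult_pCons_left)
  have c: "\<And>k. coeff (\<Prod>a\<leftarrow>x#xs. [:- a, 1:]) (Suc k) = - x * coeff ?Q (Suc k) + coeff ?Q k"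
    unfolding eq by simp
  show ?case
  proof (intro conjI allI impI)
    show "coeff (\<Prod>a\<leftarrow>x#xs. [:- a, 1:]) (length (x#xs)) = 1"
      using Cons.IH c by simp
    fix k assume "k > length (x#xs)"
    then obtain k' where k: "k = Suc k'" "k' > length xs" by (cases k) auto
    show "coeff (\<Prod>a\<leftarrow>x#xs. [:- a, 1:]) k = 0"
      using Cons.IH c k by simp
  next
    show "coeff (\<Prod>a\<leftarrow>x#xs. [:- a, 1:]) (length (x#xs) - 1) = - sum_list (x#xs)"
    proof (cases xs)
      case Nil then show ?thesis by simp
    next
      case (Cons y ys)
      then have "length xs = Suc (length xs - 1)" by simp
      then have "coeff (\<Prod>a\<leftarrow>x#xs. [:- a, 1:]) (length xs) = - x * coeff ?Q (length xs) + coeff ?Q (length xs - 1)"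
        using c by metis
      then show ?thesis using Cons.IH Cons by simp
    qed
  qed
qed

lemma trace_char_poly:
  fixes A :: "complex mat"
  assumes A: "A \<in> carrier_mat m m" and cp: "char_poly A = (\<Prod>a\<leftarrow>es. [:- a, 1:])" and m: "m \<ge> 1"
  shows "mtrace A = sum_list es"
proof -
  obtain B where B: "B \<in> carrier_mat m m" "upper_triangular B" "similar_mat A B"
    using schur_decomposition_exists[OF A cp] by blast
  from similar_matD[OF B(3)] obtain k P Q where
    PQ: "{A, B, P, Q} \<subseteq> carrier_mat k k" "P * Q = 1\<^sub>m k" "Q * P = 1\<^sub>m k" "A = P * B * Q" by blast
  have k: "k = m" using PQ A by auto
  have P: "P \<in> carrier_mat m m" and Q: "Q \<in> carrier_mat m m" using PQ k by auto
  have "mtrace A = mtrace (P * (B * Q))" using PQ(4) P B Q by (simp add: assoc_mult_mat)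
  also have "\<dots> = mtrace ((B * Q) * P)" using P B Q by (intro mtrace_mult_comm) auto
  also have "\<dots> = mtrace B" using P B Q PQ k by (simp add: assoc_mult_mat)
  finally have trAB: "mtrace A = mtrace B" .
  have cpB: "char_poly B = (\<Prod>a\<leftarrow>diag_mat B. [:- a, 1:])"
    using char_poly_upper_triangular[OF B(1) B(2)] .
  have cpA: "char_poly A = char_poly B" using char_poly_similar[OF B(3)] .
  have ld: "length (diag_mat B) = m" using B by (simp add: diag_mat_def)
  have le: "length es = m"
    using degree_linear_factors[of uminus es] degree_monic_char_poly[OF A] cp by simp
  have "- sum_list es = - sum_list (diag_mat B)"
    using lin_prod_coeff[of es] lin_prod_coeff[of "diag_mat B"] le ld m cp cpA cpB
  proof -
    have "es \<noteq> []" "diag_mat B \<noteq> []" using le ld m by auto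
    then show ?thesis using lin_prod_coeff[of es] lin_prod_coeff[of "diag_mat B"] le ld cp cpA cpB by simp
  qed
  then have "sum_list es = sum_list (diag_mat B)" by simp
  also have "\<dots> = mtrace B" using B by (simp add: diag_mat_def mtrace_def sum_list_sum_nth atLeast0LessThan)
  finally show ?thesis using trAB by simp
qed


lemma mult_idx:
  assumes "A \<in> carrier_mat nr k" "B \<in> carrier_mat k nc" "i < nr" "j < nc"
  shows "(A * B) $$ (i,j) = (\<Sum>l<k. A $$ (i,l) * B $$ (l,j))"
  using assms by (simp add: scalar_prod_def atLeast0LessThan)

lemma comm_blocks:
  fixes X p :: "complex mat"
  assumes X: "X \<in> carrier_mat (Suc n) (Suc n)" and p: "p \<in> carrier_mat (Suc n) (Suc n)"
    and Xs: "\<And>k. k < n \<Longrightarrow> X $$ (0, Suc k) = - cnj (X $$ (Suc k, 0))"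
    and ph: "\<And>k. k < n \<Longrightarrow> p $$ (0, Suc k) = cnj (p $$ (Suc k, 0))"
  defines "A \<equiv> commutator X p"
    and "x \<equiv> mat n 1 (\<lambda>(i,j). X $$ (Suc i, 0))"
    and "Xb \<equiv> mat n n (\<lambda>(i,j). X $$ (Suc i, Suc j))"
    and "z \<equiv> mat n 1 (\<lambda>(i,j). p $$ (Suc i, 0))"
    and "M \<equiv> mat n n (\<lambda>(i,j). p $$ (Suc i, Suc j))"
  shows "mat n n (\<lambda>(i,j). A $$ (Suc i, Suc j)) = x * mat_adjoint z + z * mat_adjoint x + commutator Xb M"
    and "mat n 1 (\<lambda>(i,j). A $$ (Suc i, 0)) = (p $$ (0,0) \<cdot>\<^sub>m 1\<^sub>m n - M) * x + (Xb - X $$ (0,0) \<cdot>\<^sub>m 1\<^sub>m n) * z"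
    and "A $$ (0,0) = - (mat_adjoint x * z + mat_adjoint z * x) $$ (0,0)"
proof -
  have xc: "x \<in> carrier_mat n 1" and zc: "z \<in> carrier_mat n 1" and Xbc: "Xb \<in> carrier_mat n n"
    and Mc: "M \<in> carrier_mat n n" unfolding x_def z_def Xb_def M_def by auto
  have Ac: "A \<in> carrier_mat (Suc n) (Suc n)" unfolding A_def commutator_def using X p by auto
  have Aidx: "A $$ (i,j) = (X $$ (i,0) * p $$ (0,j) + (\<Sum>l<n. X $$ (i,Suc l) * p $$ (Suc l,j)))
       - (p $$ (i,0) * X $$ (0,j) + (\<Sum>l<n. p $$ (i,Suc l) * X $$ (Suc l,j)))"
    if "i < Suc n" "j < Suc n" for i j
  proof -
    have "A $$ (i,j) = (\<Sum>l<Suc n. X $$ (i,l) * p $$ (l,j)) - (\<Sum>l<Suc n. p $$ (i,l) * X $$ (l,j))"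
      using that X p unfolding A_def commutator_def by (simp add: scalar_prod_def atLeast0LessThan del: sum.lessThan_Suc)
    then show ?thesis by (simp only: sum.lessThan_Suc_shift)
  qed
  show "mat n n (\<lambda>(i,j). A $$ (Suc i, Suc j)) = x * mat_adjoint z + z * mat_adjoint x + commutator Xb M"
  proof (rule eq_matI)
    fix i j assume ij: "i < dim_row (x * mat_adjoint z + z * mat_adjoint x + commutator Xb M)"
        "j < dim_col (x * mat_adjoint z + z * mat_adjoint x + commutator Xb M)"
    then have i: "i < n" and j: "j < n" using xc Xbc Mc by (auto simp: commutator_def)
    have h1: "A $$ (Suc i, Suc j) = X $$ (Suc i, 0) * cnj (p $$ (Suc j, 0)) + (\<Sum>l<n. X $$ (Suc i, Suc l) * p $$ (Suc l, Suc j))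
       - (p $$ (Suc i, 0) * (- cnj (X $$ (Suc j, 0))) + (\<Sum>l<n. p $$ (Suc i, Suc l) * X $$ (Suc l, Suc j)))"
      using i j by (simp add: Aidx Xs ph)
    have h2: "(x * mat_adjoint z + z * mat_adjoint x + commutator Xb M) $$ (i,j) =
       X $$ (Suc i, 0) * cnj (p $$ (Suc j, 0)) + p $$ (Suc i, 0) * cnj (X $$ (Suc j, 0)) +
       ((\<Sum>l<n. X $$ (Suc i, Suc l) * p $$ (Suc l, Suc j)) - (\<Sum>l<n. p $$ (Suc i, Suc l) * X $$ (Suc l, Suc j)))"
      using i j xc zc Xbc Mc unfolding commutator_def
      by (simp add: scalar_prod_def atLeast0LessThan, simp add: x_def z_def Xb_def M_def cong: sum.cong_simp)
    have "A $$ (Suc i, Suc j) = (x * mat_adjoint z + z * mat_adjoint x + commutator Xb M) $$ (i,j)"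
      unfolding h1 h2 by (simp add: algebra_simps)
    then show "mat n n (\<lambda>(i,j). A $$ (Suc i, Suc j)) $$ (i,j) = (x * mat_adjoint z + z * mat_adjoint x + commutator Xb M) $$ (i,j)"
      using i j by simp
  qed (use xc Xbc Mc in \<open>auto simp: commutator_def\<close>)
  show "mat n 1 (\<lambda>(i,j). A $$ (Suc i, 0)) = (p $$ (0,0) \<cdot>\<^sub>m 1\<^sub>m n - M) * x + (Xb - X $$ (0,0) \<cdot>\<^sub>m 1\<^sub>m n) * z"
  proof (rule eq_matI)
    fix i j assume ij: "i < dim_row ((p $$ (0,0) \<cdot>\<^sub>m 1\<^sub>m n - M) * x + (Xb - X $$ (0,0) \<cdot>\<^sub>m 1\<^sub>m n) * z)"
        "j < dim_col ((p $$ (0,0) \<cdot>\<^sub>m 1\<^sub>m n - M) * x + (Xb - X $$ (0,0) \<cdot>\<^sub>m 1\<^sub>m n) * z)"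
    then have i: "i < n" and j: "j = 0" using xc zc by auto
    have h1: "A $$ (Suc i, 0) = X $$ (Suc i, 0) * p $$ (0,0) + (\<Sum>l<n. X $$ (Suc i, Suc l) * p $$ (Suc l, 0))
       - (p $$ (Suc i, 0) * X $$ (0,0) + (\<Sum>l<n. p $$ (Suc i, Suc l) * X $$ (Suc l, 0)))"
      using i by (simp add: Aidx)
    have e1: "((p $$ (0,0) \<cdot>\<^sub>m 1\<^sub>m n - M) * x) $$ (i,0) = p $$ (0,0) * X $$ (Suc i, 0) - (\<Sum>l<n. p $$ (Suc i, Suc l) * X $$ (Suc l, 0))"
    proof -
      have "((p $$ (0,0) \<cdot>\<^sub>m 1\<^sub>m n - M) * x) $$ (i,0) = (\<Sum>l<n. (p $$ (0,0) * (if i = l then 1 else 0) - p $$ (Suc i, Suc l)) * X $$ (Suc l, 0))"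
        using i xc Mc by (simp add: scalar_prod_def atLeast0LessThan, simp add: x_def M_def cong: sum.cong_simp)
      also have "\<dots> = (\<Sum>l<n. (if i = l then p $$ (0,0) * X $$ (Suc l, 0) else 0) - p $$ (Suc i, Suc l) * X $$ (Suc l, 0))"
        by (rule sum.cong) (auto simp: algebra_simps)
      also have "\<dots> = (\<Sum>l<n. (if i = l then p $$ (0,0) * X $$ (Suc l, 0) else 0)) - (\<Sum>l<n. p $$ (Suc i, Suc l) * X $$ (Suc l, 0))"
        by (rule sum_subtractf)
      finally show ?thesis using i by simp
    qed
    have e2: "((Xb - X $$ (0,0) \<cdot>\<^sub>m 1\<^sub>m n) * z) $$ (i,0) = (\<Sum>l<n. X $$ (Suc i, Suc l) * p $$ (Suc l, 0)) - X $$ (0,0) * p $$ (Suc i, 0)"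
    proof -
      have "((Xb - X $$ (0,0) \<cdot>\<^sub>m 1\<^sub>m n) * z) $$ (i,0) = (\<Sum>l<n. (X $$ (Suc i, Suc l) - X $$ (0,0) * (if i = l then 1 else 0)) * p $$ (Suc l, 0))"
        using i zc Xbc by (simp add: scalar_prod_def atLeast0LessThan, simp add: z_def Xb_def cong: sum.cong_simp)
      also have "\<dots> = (\<Sum>l<n. X $$ (Suc i, Suc l) * p $$ (Suc l, 0) - (if i = l then X $$ (0,0) * p $$ (Suc l, 0) else 0))"
        by (rule sum.cong) (auto simp: algebra_simps)
      also have "\<dots> = (\<Sum>l<n. X $$ (Suc i, Suc l) * p $$ (Suc l, 0)) - (\<Sum>l<n. (if i = l then X $$ (0,0) * p $$ (Suc l, 0) else 0))"
        by (rule sum_subtractf)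
      finally show ?thesis using i by simp
    qed
    have s: "((p $$ (0,0) \<cdot>\<^sub>m 1\<^sub>m n - M) * x + (Xb - X $$ (0,0) \<cdot>\<^sub>m 1\<^sub>m n) * z) $$ (i,0)
      = ((p $$ (0,0) \<cdot>\<^sub>m 1\<^sub>m n - M) * x) $$ (i,0) + ((Xb - X $$ (0,0) \<cdot>\<^sub>m 1\<^sub>m n) * z) $$ (i,0)"
      using i xc zc Xbc Mc by simp
    have "A $$ (Suc i, 0) = ((p $$ (0,0) \<cdot>\<^sub>m 1\<^sub>m n - M) * x + (Xb - X $$ (0,0) \<cdot>\<^sub>m 1\<^sub>m n) * z) $$ (i,0)"
      unfolding s e1 e2 h1 by (simp add: algebra_simps)
    then show "mat n 1 (\<lambda>(i,j). A $$ (Suc i, 0)) $$ (i,j) = ((p $$ (0,0) \<cdot>\<^sub>m 1\<^sub>m n - M) * x + (Xb - X $$ (0,0) \<cdot>\<^sub>m 1\<^sub>m n) * z) $$ (i,j)"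
      using i j by simp
  qed (use xc zc in auto)
  show "A $$ (0,0) = - (mat_adjoint x * z + mat_adjoint z * x) $$ (0,0)"
  proof -
    have "A $$ (0,0) = X $$ (0, 0) * p $$ (0,0) + (\<Sum>l<n. (- cnj (X $$ (Suc l, 0))) * p $$ (Suc l, 0))
       - (p $$ (0, 0) * X $$ (0,0) + (\<Sum>l<n. cnj (p $$ (Suc l, 0)) * X $$ (Suc l, 0)))"
      by (simp add: Aidx Xs ph cong: sum.cong_simp)
    moreover have "(mat_adjoint x * z + mat_adjoint z * x) $$ (0,0) =
       (\<Sum>l<n. cnj (X $$ (Suc l, 0)) * p $$ (Suc l, 0)) + (\<Sum>l<n. cnj (p $$ (Suc l, 0)) * X $$ (Suc l, 0))"
      using xc zc by (simp add: scalar_prod_def atLeast0LessThan, simp add: x_def z_def cong: sum.cong_simp)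
    ultimately show ?thesis by (simp add: sum_negf)
  qed
qed


lemma ulie_D:
  assumes "X \<in> unitary_lie m"
  shows "X \<in> carrier_mat m m" "\<And>i j. i < m \<Longrightarrow> j < m \<Longrightarrow> X $$ (j,i) = - cnj (X $$ (i,j))"
proof -
  show X: "X \<in> carrier_mat m m" using assms unfolding unitary_lie_def by auto
  fix i j assume ij: "i < m" "j < m"
  have "mat_adjoint X $$ (j,i) = (- X) $$ (j,i)" using assms unfolding unitary_lie_def by auto
  then show "X $$ (j,i) = - cnj (X $$ (i,j))" using X ij by simp
qed

lemma ulie_I:
  assumes "X \<in> carrier_mat m m" "\<And>i j. i < m \<Longrightarrow> j < m \<Longrightarrow> X $$ (j,i) = - cnj (X $$ (i,j))"
  shows "X \<in> unitary_lie m"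
  unfolding unitary_lie_def
proof (intro CollectI conjI assms(1) eq_matI)
  fix i j assume "i < dim_row (- X)" "j < dim_col (- X)"
  then have ij: "i < m" "j < m" using assms(1) by auto
  show "mat_adjoint X $$ (i,j) = (- X) $$ (i,j)" using ij assms(1) assms(2)[of j i] by simp
qed (use assms in auto)

lemma herm_D:
  assumes "X \<in> hermitian_mats m"
  shows "X \<in> carrier_mat m m" "\<And>i j. i < m \<Longrightarrow> j < m \<Longrightarrow> X $$ (j,i) = cnj (X $$ (i,j))"
proof -
  show X: "X \<in> carrier_mat m m" using assms unfolding hermitian_mats_def by auto
  fix i j assume ij: "i < m" "j < m"
  have "mat_adjoint X $$ (j,i) = X $$ (j,i)" using assms unfolding hermitian_mats_def by auto
  then show "X $$ (j,i) = cnj (X $$ (i,j))" using X ij by simp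
qed

lemma comm_herm:
  fixes X p :: "complex mat"
  assumes X: "X \<in> carrier_mat m m" and p: "p \<in> carrier_mat m m"
    and Xs: "\<And>i j. i < m \<Longrightarrow> j < m \<Longrightarrow> X $$ (j,i) = - cnj (X $$ (i,j))"
    and ph: "\<And>i j. i < m \<Longrightarrow> j < m \<Longrightarrow> p $$ (j,i) = cnj (p $$ (i,j))"
    and ij: "i < m" "j < m"
  shows "commutator X p $$ (j,i) = cnj (commutator X p $$ (i,j))"
proof -
  have "commutator X p $$ (i,j) = (\<Sum>l<m. X $$ (i,l) * p $$ (l,j)) - (\<Sum>l<m. p $$ (i,l) * X $$ (l,j))"
    using X p ij unfolding commutator_def by (simp add: scalar_prod_def atLeast0LessThan)
  then have "cnj (commutator X p $$ (i,j)) = (\<Sum>l<m. cnj (X $$ (i,l)) * cnj (p $$ (l,j))) - (\<Sum>l<m. cnj (p $$ (i,l)) * cnj (X $$ (l,j)))"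
    by (simp add: cnj_sum)
  also have "\<dots> = (\<Sum>l<m. (- X $$ (l,i)) * p $$ (j,l)) - (\<Sum>l<m. p $$ (l,i) * (- X $$ (j,l)))"
  proof -
    have "(\<Sum>l<m. cnj (X $$ (i,l)) * cnj (p $$ (l,j))) = (\<Sum>l<m. (- X $$ (l,i)) * p $$ (j,l))"
    proof (rule sum.cong)
      fix l assume "l \<in> {..<m}"
      then have l: "l < m" by simp
      have "X $$ (i,l) = - cnj (X $$ (l,i))" using Xs[OF l ij(1)] .
      moreover have "p $$ (l,j) = cnj (p $$ (j,l))" using ph[OF ij(2) l] .
      ultimately show "cnj (X $$ (i,l)) * cnj (p $$ (l,j)) = (- X $$ (l,i)) * p $$ (j,l)" by simp
    qed simp
    moreover have "(\<Sum>l<m. cnj (p $$ (i,l)) * cnj (X $$ (l,j))) = (\<Sum>l<m. p $$ (l,i) * (- X $$ (j,l)))"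
    proof (rule sum.cong)
      fix l assume "l \<in> {..<m}"
      then have l: "l < m" by simp
      have "X $$ (l,j) = - cnj (X $$ (j,l))" using Xs[OF ij(2) l] .
      moreover have "p $$ (i,l) = cnj (p $$ (l,i))" using ph[OF l ij(1)] .
      ultimately show "cnj (p $$ (i,l)) * cnj (X $$ (l,j)) = p $$ (l,i) * (- X $$ (j,l))" by simp
    qed simp
    ultimately show ?thesis by simp
  qed
  also have "\<dots> = (\<Sum>l<m. X $$ (j,l) * p $$ (l,i)) - (\<Sum>l<m. p $$ (j,l) * X $$ (l,i))"
    by (simp add: sum_negf algebra_simps)
  also have "\<dots> = commutator X p $$ (j,i)"
    using X p ij unfolding commutator_def by (simp add: scalar_prod_def atLeast0LessThan)
  finally show ?thesis by simp
qed

lemma trace_ident: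
  fixes X Y p :: "complex mat"
  assumes X: "X \<in> carrier_mat m m" and Y: "Y \<in> carrier_mat m m" and p: "p \<in> carrier_mat m m"
  shows "mtrace (p * commutator X Y) = - mtrace (commutator X p * Y)"
    and "mtrace (p * commutator X Y) = mtrace (commutator Y p * X)"
proof -
  have XY: "X * Y \<in> carrier_mat m m" and YX: "Y * X \<in> carrier_mat m m" and Xp: "X * p \<in> carrier_mat m m"
    and pX: "p * X \<in> carrier_mat m m" and Yp: "Y * p \<in> carrier_mat m m" and pY: "p * Y \<in> carrier_mat m m"
    and pXY: "p * (X * Y) \<in> carrier_mat m m" and pYX: "p * (Y * X) \<in> carrier_mat m m"
    using X Y p by auto
  have t1: "mtrace (p * commutator X Y) = mtrace (p * (X * Y)) - mtrace (p * (Y * X))"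
    unfolding commutator_def by (simp only: mult_minus_distrib_mat[OF p XY YX] mtrace_minus[OF pXY pYX])
  have a1: "mtrace ((p * X) * Y) = mtrace (p * (X * Y))" using X Y p by (simp add: assoc_mult_mat)
  have a2: "mtrace ((X * p) * Y) = mtrace (p * (Y * X))"
  proof -
    have "mtrace ((X * p) * Y) = mtrace (X * (p * Y))" using X Y p by (simp add: assoc_mult_mat)
    also have "\<dots> = mtrace ((p * Y) * X)" using X pY by (intro mtrace_mult_comm)
    also have "\<dots> = mtrace (p * (Y * X))" using X Y p by (simp add: assoc_mult_mat)
    finally show ?thesis .
  qed
  have a3: "mtrace ((Y * p) * X) = mtrace (p * (X * Y))"
  proof -
    have "mtrace ((Y * p) * X) = mtrace (Y * (p * X))" using X Y p by (simp add: assoc_mult_mat)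
    also have "\<dots> = mtrace ((p * X) * Y)" using Y pX by (intro mtrace_mult_comm)
    finally show ?thesis using a1 by simp
  qed
  have a4: "mtrace ((p * Y) * X) = mtrace (p * (Y * X))" using X Y p by (simp add: assoc_mult_mat)
  have "mtrace (commutator X p * Y) = mtrace ((X * p) * Y) - mtrace ((p * X) * Y)"
    unfolding commutator_def
    by (simp only: minus_mult_distrib_mat[OF Xp pX Y] mtrace_minus[OF mult_carrier_mat[OF Xp Y] mult_carrier_mat[OF pX Y]])
  then show "mtrace (p * commutator X Y) = - mtrace (commutator X p * Y)"
    using t1 a1 a2 by simp
  have "mtrace (commutator Y p * X) = mtrace ((Y * p) * X) - mtrace ((p * Y) * X)"
    unfolding commutator_def
    by (simp only: minus_mult_distrib_mat[OF Yp pY X] mtrace_minus[OF mult_carrier_mat[OF Yp X] mult_carrier_mat[OF pY X]])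
  then show "mtrace (p * commutator X Y) = mtrace (commutator Y p * X)"
    using t1 a3 a4 by simp
qed

lemma embed0_carrier: "Y \<in> carrier_mat n n \<Longrightarrow> embed0 n Y \<in> carrier_mat (Suc n) (Suc n)"
  unfolding embed0_def by auto

lemma embed0_idx:
  assumes "Y \<in> carrier_mat n n" "i < Suc n" "j < Suc n"
  shows "embed0 n Y $$ (i,j) = (if i = 0 \<or> j = 0 then 0 else Y $$ (i - 1, j - 1))"
  using assms unfolding embed0_def by auto

lemma embed0_ulie:
  assumes "Y \<in> unitary_lie n"
  shows "embed0 n Y \<in> unitary_lie (n + 1)"
proof -
  have Y: "Y \<in> carrier_mat n n" using ulie_D[OF assms] by auto
  show ?thesis
  proof (rule ulie_I)
    show "embed0 n Y \<in> carrier_mat (n + 1) (n + 1)" using embed0_carrier[OF Y] by simp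
    fix i j assume ij: "i < n + 1" "j < n + 1"
    show "embed0 n Y $$ (j,i) = - cnj (embed0 n Y $$ (i,j))"
    proof (cases "i = 0 \<or> j = 0")
      case True then show ?thesis using ij Y by (auto simp: embed0_idx)
    next
      case False
      then have "i - 1 < n" "j - 1 < n" using ij by auto
      from ulie_D(2)[OF assms this] show ?thesis using ij Y False by (simp add: embed0_idx)
    qed
  qed
qed

lemma trace_embed0:
  fixes A Y :: "complex mat"
  assumes A: "A \<in> carrier_mat (Suc n) (Suc n)" and Y: "Y \<in> carrier_mat n n"
  shows "mtrace (A * embed0 n Y) = mtrace (mat n n (\<lambda>(i,j). A $$ (Suc i, Suc j)) * Y)"
proof -
  have "mtrace (A * embed0 n Y) = (\<Sum>i<Suc n. \<Sum>l<Suc n. A $$ (i,l) * embed0 n Y $$ (l,i))"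
    using A Y embed0_carrier[OF Y] by (simp add: mtrace_def scalar_prod_def atLeast0LessThan del: sum.lessThan_Suc)
  also have "\<dots> = (\<Sum>i<n. \<Sum>l<n. A $$ (Suc i, Suc l) * Y $$ (l,i))"
    by (simp only: sum.lessThan_Suc_shift) (simp add: embed0_idx Y)
  also have "\<dots> = mtrace (mat n n (\<lambda>(i,j). A $$ (Suc i, Suc j)) * Y)"
    using Y by (simp add: mtrace_def scalar_prod_def atLeast0LessThan cong: sum.cong_simp)
  finally show ?thesis .
qed

lemma herm_zero:
  fixes H :: "complex mat"
  assumes H: "H \<in> carrier_mat n n" and Hh: "\<And>i j. i < n \<Longrightarrow> j < n \<Longrightarrow> H $$ (j,i) = cnj (H $$ (i,j))"
    and tr: "mtrace (H * (\<i> \<cdot>\<^sub>m H)) = 0"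
  shows "H = 0\<^sub>m n n"
proof -
  have "mtrace (H * (\<i> \<cdot>\<^sub>m H)) = (\<Sum>i<n. \<Sum>l<n. H $$ (i,l) * (\<i> * H $$ (l,i)))"
    using H by (simp add: mtrace_def scalar_prod_def atLeast0LessThan)
  also have "\<dots> = (\<Sum>i<n. \<Sum>l<n. \<i> * complex_of_real ((cmod (H $$ (i,l)))\<^sup>2))"
  proof (intro sum.cong refl)
    fix i l assume "i \<in> {..<n}" "l \<in> {..<n}"
    then have "H $$ (l,i) = cnj (H $$ (i,l))" using Hh[of i l] by auto
    then show "H $$ (i,l) * (\<i> * H $$ (l,i)) = \<i> * complex_of_real ((cmod (H $$ (i,l)))\<^sup>2)"
      by (simp only: complex_norm_square) (simp add: mult_ac)
  qed
  also have "\<dots> = \<i> * complex_of_real (\<Sum>i<n. \<Sum>l<n. (cmod (H $$ (i,l)))\<^sup>2)"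
    by (simp add: sum_distrib_left)
  finally have eqS: "mtrace (H * (\<i> \<cdot>\<^sub>m H)) = \<i> * complex_of_real (\<Sum>i<n. \<Sum>l<n. (cmod (H $$ (i,l)))\<^sup>2)" .
  have "\<i> * complex_of_real (\<Sum>i<n. \<Sum>l<n. (cmod (H $$ (i,l)))\<^sup>2) = 0" by (simp only: eqS[symmetric] tr)
  then have "complex_of_real (\<Sum>i<n. \<Sum>l<n. (cmod (H $$ (i,l)))\<^sup>2) = 0" by (metis mult_eq_0_iff complex_i_not_zero)
  then have "(\<Sum>i<n. \<Sum>l<n. (cmod (H $$ (i,l)))\<^sup>2) = 0" by (metis of_real_eq_0_iff)
  then have "\<forall>i\<in>{..<n}. (\<Sum>l<n. (cmod (H $$ (i,l)))\<^sup>2) = 0"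
    by (subst (asm) sum_nonneg_eq_0_iff) (auto intro: sum_nonneg)
  then have z: "\<And>i l. i < n \<Longrightarrow> l < n \<Longrightarrow> H $$ (i,l) = 0"
    by (auto simp: sum_nonneg_eq_0_iff)
  show ?thesis by (rule eq_matI) (use H z in auto)
qed

lemma ismult_ulie:
  assumes H: "H \<in> carrier_mat n n" and Hh: "\<And>i j. i < n \<Longrightarrow> j < n \<Longrightarrow> H $$ (j,i) = cnj (H $$ (i,j))"
  shows "\<i> \<cdot>\<^sub>m H \<in> unitary_lie n"
proof (rule ulie_I)
  show "\<i> \<cdot>\<^sub>m H \<in> carrier_mat n n" using H by simp
  fix i j assume ij: "i < n" "j < n"
  show "(\<i> \<cdot>\<^sub>m H) $$ (j,i) = - cnj ((\<i> \<cdot>\<^sub>m H) $$ (i,j))" using ij H Hh[OF ij] by simp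
qed

lemma reconstruct:
  fixes A :: "complex mat"
  assumes A: "A \<in> carrier_mat (Suc n) (Suc n)" and Ah: "\<And>i j. i < Suc n \<Longrightarrow> j < Suc n \<Longrightarrow> A $$ (j,i) = cnj (A $$ (i,j))"
    and A00: "A $$ (0,0) = 0" and br: "mat n n (\<lambda>(i,j). A $$ (Suc i, Suc j)) = 0\<^sub>m n n"
  shows "A = offdiag_block n (mat n 1 (\<lambda>(i,j). A $$ (Suc i, 0)))"
proof (rule eq_matI)
  show "dim_row A = dim_row (offdiag_block n (mat n 1 (\<lambda>(i,j). A $$ (Suc i, 0))))"
    "dim_col A = dim_col (offdiag_block n (mat n 1 (\<lambda>(i,j). A $$ (Suc i, 0))))"
    using A by (auto simp: offdiag_block_def)
  fix i j assume "i < dim_row (offdiag_block n (mat n 1 (\<lambda>(i,j). A $$ (Suc i, 0))))"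
    "j < dim_col (offdiag_block n (mat n 1 (\<lambda>(i,j). A $$ (Suc i, 0))))"
  then have ij: "i < Suc n" "j < Suc n" by (auto simp: offdiag_block_def)
  have brz: "A $$ (Suc a, Suc b) = 0" if "a < n" "b < n" for a b
  proof -
    have "mat n n (\<lambda>(i,j). A $$ (Suc i, Suc j)) $$ (a,b) = 0" using br that by simp
    then show ?thesis using that by simp
  qed
  show "A $$ (i,j) = offdiag_block n (mat n 1 (\<lambda>(i,j). A $$ (Suc i, 0))) $$ (i,j)"
  proof (cases i)
    case 0
    then show ?thesis
    proof (cases j)
      case 0 then show ?thesis using \<open>i = 0\<close> A00 by (simp add: offdiag_block_def)
    next
      case (Suc j') then show ?thesis using \<open>i = 0\<close> ij Ah[of "Suc j'" 0] by (simp add: offdiag_block_def)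
    qed
  next
    case (Suc i')
    then show ?thesis
    proof (cases j)
      case 0 then show ?thesis using \<open>i = Suc i'\<close> ij by (simp add: offdiag_block_def)
    next
      case (Suc j') then show ?thesis using \<open>i = Suc i'\<close> ij brz[of i' j'] by (simp add: offdiag_block_def)
    qed
  qed
qed


lemma embed0_blocks:
  assumes Y: "Y \<in> carrier_mat n n"
  shows "mat n 1 (\<lambda>(i,j). embed0 n Y $$ (Suc i, 0)) = 0\<^sub>m n 1"
    "mat n n (\<lambda>(i,j). embed0 n Y $$ (Suc i, Suc j)) = Y"
    "embed0 n Y $$ (0,0) = 0"
  by (rule eq_matI; use Y in \<open>simp add: embed0_idx\<close>)+ (use Y in \<open>simp add: embed0_idx\<close>)

lemma comm_shift:
  fixes X M :: "complex mat"
  assumes X: "X \<in> carrier_mat n n" and M: "M \<in> carrier_mat n n"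
  shows "commutator (X - a \<cdot>\<^sub>m 1\<^sub>m n) M = commutator X M"
proof -
  have "(X - a \<cdot>\<^sub>m 1\<^sub>m n) * M = X * M - a \<cdot>\<^sub>m M"
    using X M by (simp add: minus_mult_distrib_mat[of X n n "a \<cdot>\<^sub>m 1\<^sub>m n" M n] mult_smult_assoc_mat[of "1\<^sub>m n" n n M n])
  moreover have "M * (X - a \<cdot>\<^sub>m 1\<^sub>m n) = M * X - a \<cdot>\<^sub>m M"
    using X M by (simp add: mult_minus_distrib_mat[of M n n X n "a \<cdot>\<^sub>m 1\<^sub>m n"] mult_smult_distrib[of M n n "1\<^sub>m n" n])
  ultimately show ?thesis unfolding commutator_def
    by (intro eq_matI) (use X M in auto)
qed

lemma comm_carrier: "X \<in> carrier_mat m m \<Longrightarrow> Y \<in> carrier_mat m m \<Longrightarrow> commutator X Y \<in> carrier_mat m m"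
  unfolding commutator_def by (rule minus_carrier_mat) simp

lemma mtrace_1x1: "A \<in> carrier_mat 1 1 \<Longrightarrow> mtrace A = A $$ (0,0)"
  by (simp add: mtrace_def)

lemma mtrace_zero: "mtrace (0\<^sub>m m m) = 0"
  by (simp add: mtrace_def)

lemma mtrace_commutator: "X \<in> carrier_mat m m \<Longrightarrow> Y \<in> carrier_mat m m \<Longrightarrow> mtrace (commutator X Y) = 0"
  unfolding commutator_def by (subst mtrace_minus[of _ m]) (auto intro: mtrace_mult_comm)


lemma zero_x_blocks:
  fixes z C :: "complex mat"
  assumes z: "z \<in> carrier_mat n 1" and C: "C \<in> carrier_mat n n"
  shows "0\<^sub>m n 1 * mat_adjoint z + z * mat_adjoint (0\<^sub>m n 1) + C = C"
  by (rule eq_matI) (use z C in \<open>auto simp: scalar_prod_def\<close>)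

lemma zero_x_bl:
  fixes z M Y :: "complex mat"
  assumes z: "z \<in> carrier_mat n 1" and M: "M \<in> carrier_mat n n" and Y: "Y \<in> carrier_mat n n"
  shows "(c \<cdot>\<^sub>m 1\<^sub>m n - M) * 0\<^sub>m n 1 + (Y - 0 \<cdot>\<^sub>m 1\<^sub>m n) * z = Y * z"
  by (rule eq_matI) (use z M Y in \<open>auto simp: scalar_prod_def\<close>)

lemma zero_x_00:
  fixes z :: "complex mat"
  assumes z: "z \<in> carrier_mat n 1"
  shows "(mat_adjoint (0\<^sub>m n 1) * z + mat_adjoint z * 0\<^sub>m n 1) $$ (0,0) = 0"
  using z by (simp add: scalar_prod_def)

lemma X_zero_shift: "X \<in> carrier_mat n n \<Longrightarrow> X - (0::complex) \<cdot>\<^sub>m 1\<^sub>m n = X"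
  by (rule eq_matI) auto


theorem lemma4p3:
  fixes n :: nat and lam mu :: "nat \<Rightarrow> real" and p :: "complex mat"
  assumes "n \<ge> 1"
    and "\<And>i j. i \<le> j \<Longrightarrow> j < n + 1 \<Longrightarrow> lam j \<le> lam i"
    and "\<And>i j. i \<le> j \<Longrightarrow> j < n \<Longrightarrow> mu j \<le> mu i"
    and "p \<in> orbit_O n lam"
    and "moment n p = diag_of n mu"
  defines "M \<equiv> diag_of n mu"
    and "z \<equiv> mat n 1 (\<lambda>(i, j). p $$ (i + 1, 0))"
    and "c \<equiv> complex_of_real ((\<Sum>i<n + 1. lam i) - (\<Sum>i<n. mu i))"
  shows "(omega_orth n p (tangent_Korbit n p) =
           {offdiag_block n ((c \<cdot>\<^sub>m 1\<^sub>m n - M) * x + X * z) | X x.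
              X \<in> unitary_lie n \<and> x \<in> carrier_mat n 1 \<and>
              mat_adjoint x * z + mat_adjoint z * x = 0\<^sub>m 1 1 \<and>
              x * mat_adjoint z + z * mat_adjoint x + commutator X M = 0\<^sub>m n n}) \<and>
         (tangent_Korbit n p \<inter> omega_orth n p (tangent_Korbit n p) =
           {offdiag_block n (Y * z) | Y. Y \<in> unitary_lie n \<and> commutator Y M = 0\<^sub>m n n})"
proof -
  have pO: "p \<in> hermitian_mats (n + 1)" and cp: "char_poly p = (\<Prod>i<n + 1. [: - complex_of_real (lam i), 1 :])"
    using assms(4) unfolding orbit_O_def by auto
  have pC: "p \<in> carrier_mat (Suc n) (Suc n)" using herm_D(1)[OF pO] by simp
  have ph: "\<And>i j. i < Suc n \<Longrightarrow> j < Suc n \<Longrightarrow> p $$ (j,i) = cnj (p $$ (i,j))"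
    using herm_D(2)[OF pO] unfolding Suc_eq_plus1 .
  have ph0: "\<And>k. k < n \<Longrightarrow> p $$ (0, Suc k) = cnj (p $$ (Suc k, 0))"
    using ph[of "Suc k" 0 for k] by simp
  have Mc: "M \<in> carrier_mat n n" unfolding M_def diag_of_def by simp
  have zc: "z \<in> carrier_mat n 1" unfolding z_def by simp
  have pM: "p $$ (Suc i, Suc j) = M $$ (i,j)" if "i < n" "j < n" for i j
  proof -
    have "moment n p $$ (i,j) = diag_of n mu $$ (i,j)" using assms(5) by simp
    then show ?thesis using that unfolding M_def moment_def by simp
  qed
  have Meq: "mat n n (\<lambda>(i,j). p $$ (Suc i, Suc j)) = M"
    by (rule eq_matI) (use Mc pM in auto)
  have zeq: "mat n 1 (\<lambda>(i,j). p $$ (Suc i, 0)) = z" unfolding z_def by simp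
  have p00: "p $$ (0,0) = c"
  proof -
    let ?es = "map (\<lambda>i. complex_of_real (lam i)) [0..<Suc n]"
    have "char_poly p = (\<Prod>a\<leftarrow>?es. [:- a, 1:])"
      unfolding cp using prod.distinct_set_conv_list[of "[0..<Suc n]" "\<lambda>i. [: - complex_of_real (lam i), 1 :]"]
      by (simp add: atLeast0LessThan o_def)
    from trace_char_poly[OF pC this] have "mtrace p = sum_list ?es" by simp
    also have "\<dots> = (\<Sum>i<Suc n. complex_of_real (lam i))"
      using sum.distinct_set_conv_list[of "[0..<Suc n]" "\<lambda>i. complex_of_real (lam i)"]
      by (simp add: atLeast0LessThan o_def)
    finally have tr1: "mtrace p = (\<Sum>i<Suc n. complex_of_real (lam i))" .
    have "mtrace p = p $$ (0,0) + (\<Sum>i<n. p $$ (Suc i, Suc i))"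
      using pC by (simp add: mtrace_def atLeast0LessThan sum.lessThan_Suc_shift del: sum.lessThan_Suc)
    also have "(\<Sum>i<n. p $$ (Suc i, Suc i)) = (\<Sum>i<n. complex_of_real (mu i))"
      by (rule sum.cong) (auto simp: pM M_def diag_of_def)
    finally have "p $$ (0,0) = (\<Sum>i<Suc n. complex_of_real (lam i)) - (\<Sum>i<n. complex_of_real (mu i))"
      using tr1 by (simp add: algebra_simps)
    then show ?thesis unfolding c_def by simp
  qed
  have BLK: "mat n n (\<lambda>(i,j). commutator X1 p $$ (Suc i, Suc j)) =
              mat n 1 (\<lambda>(i,j). X1 $$ (Suc i, 0)) * mat_adjoint z + z * mat_adjoint (mat n 1 (\<lambda>(i,j). X1 $$ (Suc i, 0)))
              + commutator (mat n n (\<lambda>(i,j). X1 $$ (Suc i, Suc j))) M"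
    "mat n 1 (\<lambda>(i,j). commutator X1 p $$ (Suc i, 0)) =
        (c \<cdot>\<^sub>m 1\<^sub>m n - M) * mat n 1 (\<lambda>(i,j). X1 $$ (Suc i, 0)) + (mat n n (\<lambda>(i,j). X1 $$ (Suc i, Suc j)) - X1 $$ (0,0) \<cdot>\<^sub>m 1\<^sub>m n) * z"
    "commutator X1 p $$ (0,0) = - (mat_adjoint (mat n 1 (\<lambda>(i,j). X1 $$ (Suc i, 0))) * z + mat_adjoint z * mat n 1 (\<lambda>(i,j). X1 $$ (Suc i, 0))) $$ (0,0)"
    "commutator X1 p \<in> carrier_mat (Suc n) (Suc n)"
    "\<And>i j. i < Suc n \<Longrightarrow> j < Suc n \<Longrightarrow> commutator X1 p $$ (j,i) = cnj (commutator X1 p $$ (i,j))"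
    if X1: "X1 \<in> unitary_lie (n + 1)" for X1
  proof -
    have X1c: "X1 \<in> carrier_mat (Suc n) (Suc n)" using ulie_D(1)[OF X1] by simp
    have Xs: "\<And>i j. i < Suc n \<Longrightarrow> j < Suc n \<Longrightarrow> X1 $$ (j,i) = - cnj (X1 $$ (i,j))" using ulie_D(2)[OF X1] unfolding Suc_eq_plus1 .
    have Xs0: "\<And>k. k < n \<Longrightarrow> X1 $$ (0, Suc k) = - cnj (X1 $$ (Suc k, 0))" using Xs[of "Suc k" 0 for k] by simp
    note cb = comm_blocks[OF X1c pC Xs0 ph0, unfolded zeq Meq p00]
    show "mat n n (\<lambda>(i,j). commutator X1 p $$ (Suc i, Suc j)) =
              mat n 1 (\<lambda>(i,j). X1 $$ (Suc i, 0)) * mat_adjoint z + z * mat_adjoint (mat n 1 (\<lambda>(i,j). X1 $$ (Suc i, 0)))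
              + commutator (mat n n (\<lambda>(i,j). X1 $$ (Suc i, Suc j))) M" by (rule cb(1))
    show "mat n 1 (\<lambda>(i,j). commutator X1 p $$ (Suc i, 0)) =
        (c \<cdot>\<^sub>m 1\<^sub>m n - M) * mat n 1 (\<lambda>(i,j). X1 $$ (Suc i, 0)) + (mat n n (\<lambda>(i,j). X1 $$ (Suc i, Suc j)) - X1 $$ (0,0) \<cdot>\<^sub>m 1\<^sub>m n) * z"
      by (rule cb(2))
    show "commutator X1 p $$ (0,0) = - (mat_adjoint (mat n 1 (\<lambda>(i,j). X1 $$ (Suc i, 0))) * z + mat_adjoint z * mat n 1 (\<lambda>(i,j). X1 $$ (Suc i, 0))) $$ (0,0)"
      by (rule cb(3))
    show "commutator X1 p \<in> carrier_mat (Suc n) (Suc n)" using X1c pC unfolding commutator_def by auto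
    show "\<And>i j. i < Suc n \<Longrightarrow> j < Suc n \<Longrightarrow> commutator X1 p $$ (j,i) = cnj (commutator X1 p $$ (i,j))"
      by (rule comm_herm[OF X1c pC Xs ph])
  qed
  have CH: "A \<in> omega_orth n p (tangent_Korbit n p) \<longleftrightarrow>
      (\<exists>X1 \<in> unitary_lie (n + 1). A = commutator X1 p) \<and> mat n n (\<lambda>(i,j). A $$ (Suc i, Suc j)) = 0\<^sub>m n n" for A
  proof
    assume A: "A \<in> omega_orth n p (tangent_Korbit n p)"
    then obtain X1 where X1: "X1 \<in> unitary_lie (n + 1)" and AX: "A = commutator X1 p"
      unfolding omega_orth_def tangent_O_def by auto
    have X1c: "X1 \<in> carrier_mat (Suc n) (Suc n)" using ulie_D(1)[OF X1] by simp
    define H where "H = mat n n (\<lambda>(i,j). A $$ (Suc i, Suc j))"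
    have Hc: "H \<in> carrier_mat n n" unfolding H_def by simp
    have Hh: "H $$ (j,i) = cnj (H $$ (i,j))" if "i < n" "j < n" for i j
      using BLK(5)[OF X1, of "Suc i" "Suc j"] that unfolding H_def AX by simp
    have Yu: "\<i> \<cdot>\<^sub>m H \<in> unitary_lie n" by (rule ismult_ulie[OF Hc Hh])
    have Yc: "\<i> \<cdot>\<^sub>m H \<in> carrier_mat n n" using Hc by simp
    have E: "embed0 n (\<i> \<cdot>\<^sub>m H) \<in> unitary_lie (n + 1)" by (rule embed0_ulie[OF Yu])
    have Ec: "embed0 n (\<i> \<cdot>\<^sub>m H) \<in> carrier_mat (Suc n) (Suc n)" by (rule embed0_carrier[OF Yc])
    have B: "commutator (embed0 n (\<i> \<cdot>\<^sub>m H)) p \<in> tangent_Korbit n p"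
      unfolding tangent_Korbit_def using Yu by auto
    have "omega_rep p X1 (embed0 n (\<i> \<cdot>\<^sub>m H)) = 0"
      using A B X1 E AX unfolding omega_orth_def by blast
    then have "mtrace (p * commutator X1 (embed0 n (\<i> \<cdot>\<^sub>m H))) = 0"
      unfolding omega_rep_def by simp
    then have "mtrace (A * embed0 n (\<i> \<cdot>\<^sub>m H)) = 0"
      using trace_ident(1)[OF X1c Ec pC] AX by simp
    then have trH: "mtrace (H * (\<i> \<cdot>\<^sub>m H)) = 0"
      using trace_embed0[of A n "\<i> \<cdot>\<^sub>m H"] BLK(4)[OF X1] AX Yc unfolding H_def by simp
    have "H = 0\<^sub>m n n"
      apply (rule herm_zero[where n=n])
        apply (rule Hc)
       apply (rule Hh; assumption)
      apply (rule trH)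
      done
    then show "(\<exists>X1 \<in> unitary_lie (n + 1). A = commutator X1 p) \<and> mat n n (\<lambda>(i,j). A $$ (Suc i, Suc j)) = 0\<^sub>m n n"
      using X1 AX unfolding H_def by auto
  next
    assume "(\<exists>X1 \<in> unitary_lie (n + 1). A = commutator X1 p) \<and> mat n n (\<lambda>(i,j). A $$ (Suc i, Suc j)) = 0\<^sub>m n n"
    then obtain X1 where X1: "X1 \<in> unitary_lie (n + 1)" and AX: "A = commutator X1 p"
      and H0: "mat n n (\<lambda>(i,j). A $$ (Suc i, Suc j)) = 0\<^sub>m n n" by auto
    have Ac: "A \<in> carrier_mat (Suc n) (Suc n)" using BLK(4)[OF X1] AX by simp
    have "A \<in> tangent_O n p" unfolding tangent_O_def using X1 AX by auto
    moreover have "omega_rep p X2 Y2 = 0"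
      if B: "B \<in> tangent_Korbit n p" and X2: "X2 \<in> unitary_lie (n + 1)" and Y2: "Y2 \<in> unitary_lie (n + 1)"
        and AX2: "A = commutator X2 p" and BY2: "B = commutator Y2 p" for B X2 Y2
    proof -
      obtain Y where Y: "Y \<in> unitary_lie n" and BY: "B = commutator (embed0 n Y) p"
        using B unfolding tangent_Korbit_def by auto
      have Yc: "Y \<in> carrier_mat n n" using ulie_D(1)[OF Y] .
      have Ec: "embed0 n Y \<in> carrier_mat (Suc n) (Suc n)" by (rule embed0_carrier[OF Yc])
      have X2c: "X2 \<in> carrier_mat (Suc n) (Suc n)" using ulie_D(1)[OF X2] by simp
      have Y2c: "Y2 \<in> carrier_mat (Suc n) (Suc n)" using ulie_D(1)[OF Y2] by simp
      have "mtrace (p * commutator X2 Y2) = mtrace (commutator Y2 p * X2)"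
        by (rule trace_ident(2)[OF X2c Y2c pC])
      also have "\<dots> = mtrace (commutator (embed0 n Y) p * X2)" using BY BY2 by simp
      also have "\<dots> = mtrace (p * commutator X2 (embed0 n Y))"
        by (rule trace_ident(2)[OF X2c Ec pC, symmetric])
      also have "\<dots> = - mtrace (A * embed0 n Y)"
        using trace_ident(1)[OF X2c Ec pC] AX2 by simp
      also have "\<dots> = - mtrace (mat n n (\<lambda>(i,j). A $$ (Suc i, Suc j)) * Y)"
        using trace_embed0[OF Ac Yc] by simp
      also have "\<dots> = 0" using H0 Yc by (simp add: mtrace_zero)
      finally show ?thesis unfolding omega_rep_def by simp
    qed
    ultimately show "A \<in> omega_orth n p (tangent_Korbit n p)"
      unfolding omega_orth_def by blast
  qed
  have P1: "omega_orth n p (tangent_Korbit n p) =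
           {offdiag_block n ((c \<cdot>\<^sub>m 1\<^sub>m n - M) * x + X * z) | X x.
              X \<in> unitary_lie n \<and> x \<in> carrier_mat n 1 \<and>
              mat_adjoint x * z + mat_adjoint z * x = 0\<^sub>m 1 1 \<and>
              x * mat_adjoint z + z * mat_adjoint x + commutator X M = 0\<^sub>m n n}" (is "?L = ?R")
  proof
    show "?L \<subseteq> ?R"
    proof
      fix A assume AL: "A \<in> ?L"
      have "(\<exists>X1 \<in> unitary_lie (n + 1). A = commutator X1 p) \<and> mat n n (\<lambda>(i,j). A $$ (Suc i, Suc j)) = 0\<^sub>m n n"
        using CH[of A] AL by (simp only:)
      then obtain X1 where X1: "X1 \<in> unitary_lie (n + 1)" and AX: "A = commutator X1 p"
        and H0: "mat n n (\<lambda>(i,j). A $$ (Suc i, Suc j)) = 0\<^sub>m n n" by blast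
      have X1c: "X1 \<in> carrier_mat (Suc n) (Suc n)" using ulie_D(1)[OF X1] by simp
      define x where "x = mat n 1 (\<lambda>(i,j). X1 $$ (Suc i, 0))"
      define Xb where "Xb = mat n n (\<lambda>(i,j). X1 $$ (Suc i, Suc j))"
      define a where "a = X1 $$ (0,0)"
      define X where "X = Xb - a \<cdot>\<^sub>m 1\<^sub>m n"
      have xc: "x \<in> carrier_mat n 1" and Xbc: "Xb \<in> carrier_mat n n" unfolding x_def Xb_def by auto
      have Xc: "X \<in> carrier_mat n n" unfolding X_def by (rule minus_carrier_mat) simp
      have a_e: "a = - cnj a" unfolding a_def by (rule ulie_D(2)[OF X1]) simp_all
      have a_cnj: "cnj a = - a" using arg_cong[OF a_e, of cnj] by simp
      have Xu: "X \<in> unitary_lie n"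
      proof (rule ulie_I[OF Xc])
        fix i j assume ij: "i < n" "j < n"
        have "X1 $$ (Suc j, Suc i) = - cnj (X1 $$ (Suc i, Suc j))" by (rule ulie_D(2)[OF X1]) (use ij in simp_all)
        then show "X $$ (j,i) = - cnj (X $$ (i,j))" using ij a_cnj unfolding X_def Xb_def by auto
      qed
      have br: "x * mat_adjoint z + z * mat_adjoint x + commutator Xb M = 0\<^sub>m n n"
        using BLK(1)[OF X1] H0 AX unfolding x_def Xb_def by simp
      have c1: "mat_adjoint x * z + mat_adjoint z * x = 0\<^sub>m 1 1"
      proof -
        have "mtrace (x * mat_adjoint z + z * mat_adjoint x + commutator Xb M) = 0"
          using br by (simp add: mtrace_zero)
        moreover have xz: "x * mat_adjoint z \<in> carrier_mat n n" and zx: "z * mat_adjoint x \<in> carrier_mat n n"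
          using xc zc by auto
        moreover have cm: "commutator Xb M \<in> carrier_mat n n" by (rule comm_carrier[OF Xbc Mc])
        ultimately have "mtrace (x * mat_adjoint z) + mtrace (z * mat_adjoint x) = 0"
          using mtrace_commutator[OF Xbc Mc]
          by (simp only: mtrace_add[OF add_carrier_mat[OF zx] cm] mtrace_add[OF xz zx]) simp
        then have "mtrace (mat_adjoint z * x) + mtrace (mat_adjoint x * z) = 0"
          using mtrace_mult_comm[of x n 1 "mat_adjoint z"] mtrace_mult_comm[of z n 1 "mat_adjoint x"] xc zc by simp
        then have e: "(mat_adjoint x * z + mat_adjoint z * x) $$ (0,0) = 0"
          using xc zc by (simp add: mtrace_def add.commute)
        show ?thesis by (rule eq_matI) (use e xc zc in auto)
      qed
      have c2: "x * mat_adjoint z + z * mat_adjoint x + commutator X M = 0\<^sub>m n n"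
        using br comm_shift[OF Xbc Mc] unfolding X_def by simp
      have A00: "A $$ (0,0) = 0" using BLK(3)[OF X1] c1 AX unfolding x_def by simp
      have "A = offdiag_block n (mat n 1 (\<lambda>(i,j). A $$ (Suc i, 0)))"
        unfolding AX by (rule reconstruct[OF BLK(4)[OF X1] BLK(5)[OF X1]]) (use A00 H0 AX in simp_all)
      also have "mat n 1 (\<lambda>(i,j). A $$ (Suc i, 0)) = (c \<cdot>\<^sub>m 1\<^sub>m n - M) * x + X * z"
        using BLK(2)[OF X1] AX unfolding x_def X_def Xb_def a_def by simp
      finally have AE: "A = offdiag_block n ((c \<cdot>\<^sub>m 1\<^sub>m n - M) * x + X * z)" .
      show "A \<in> ?R" unfolding mem_Collect_eq
        by (rule exI[of _ X], rule exI[of _ x]) (intro conjI AE Xu xc c1 c2)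
    qed
  next
    show "?R \<subseteq> ?L"
    proof
      fix A assume "A \<in> ?R"
      then obtain X x where Xu: "X \<in> unitary_lie n" and xc: "x \<in> carrier_mat n 1"
        and c1: "mat_adjoint x * z + mat_adjoint z * x = 0\<^sub>m 1 1"
        and c2: "x * mat_adjoint z + z * mat_adjoint x + commutator X M = 0\<^sub>m n n"
        and A: "A = offdiag_block n ((c \<cdot>\<^sub>m 1\<^sub>m n - M) * x + X * z)" by blast
      have Xc: "X \<in> carrier_mat n n" using ulie_D(1)[OF Xu] .
      define X1 where "X1 = mat (Suc n) (Suc n) (\<lambda>(i,j). if i = 0 then (if j = 0 then 0 else - cnj (x $$ (j - 1, 0)))
          else if j = 0 then x $$ (i - 1, 0) else X $$ (i - 1, j - 1))"
      have X1u: "X1 \<in> unitary_lie (n + 1)"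
      proof (rule ulie_I)
        show "X1 \<in> carrier_mat (n + 1) (n + 1)" unfolding X1_def by simp
        fix i j assume ij: "i < n + 1" "j < n + 1"
        show "X1 $$ (j,i) = - cnj (X1 $$ (i,j))"
        proof (cases "i = 0 \<or> j = 0")
          case True then show ?thesis using ij unfolding X1_def by auto
        next
          case False
          then have "i - 1 < n" "j - 1 < n" using ij by auto
          from ulie_D(2)[OF Xu this] show ?thesis using ij False unfolding X1_def by simp
        qed
      qed
      have bx: "mat n 1 (\<lambda>(i,j). X1 $$ (Suc i, 0)) = x" by (rule eq_matI) (use xc in \<open>auto simp: X1_def\<close>)
      have bX: "mat n n (\<lambda>(i,j). X1 $$ (Suc i, Suc j)) = X" by (rule eq_matI) (use Xc in \<open>auto simp: X1_def\<close>)
      have b0: "X1 $$ (0,0) = 0" unfolding X1_def by simp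
      define A' where "A' = commutator X1 p"
      have H0: "mat n n (\<lambda>(i,j). A' $$ (Suc i, Suc j)) = 0\<^sub>m n n"
        using BLK(1)[OF X1u] c2 unfolding A'_def bx bX by simp
      have A00: "A' $$ (0,0) = 0" using BLK(3)[OF X1u] c1 unfolding A'_def bx by simp
      have "A' = offdiag_block n (mat n 1 (\<lambda>(i,j). A' $$ (Suc i, 0)))"
        unfolding A'_def by (rule reconstruct[OF BLK(4)[OF X1u] BLK(5)[OF X1u]]) (use A00 H0 in \<open>simp_all add: A'_def\<close>)
      also have "mat n 1 (\<lambda>(i,j). A' $$ (Suc i, 0)) = (c \<cdot>\<^sub>m 1\<^sub>m n - M) * x + X * z"
        using BLK(2)[OF X1u] X_zero_shift[OF Xc] unfolding A'_def bx bX b0 by simp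
      finally have "A = A'" using A by simp
      moreover have "A' \<in> ?L"
      proof -
        have "\<exists>X1 \<in> unitary_lie (n + 1). A' = commutator X1 p" using X1u unfolding A'_def by blast
        then show ?thesis using CH[of A'] H0 by blast
      qed
      ultimately show "A \<in> ?L" by simp
    qed
  qed
  have P2: "tangent_Korbit n p \<inter> omega_orth n p (tangent_Korbit n p) =
           {offdiag_block n (Y * z) | Y. Y \<in> unitary_lie n \<and> commutator Y M = 0\<^sub>m n n}" (is "?L = ?R")
  proof -
    have key: "(commutator (embed0 n Y) p \<in> omega_orth n p (tangent_Korbit n p) \<longleftrightarrow> commutator Y M = 0\<^sub>m n n) \<and>
       (commutator Y M = 0\<^sub>m n n \<longrightarrow> commutator (embed0 n Y) p = offdiag_block n (Y * z))"
      if Yu: "Y \<in> unitary_lie n" for Y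
    proof -
      have Yc: "Y \<in> carrier_mat n n" using ulie_D(1)[OF Yu] .
      have Eu: "embed0 n Y \<in> unitary_lie (n + 1)" by (rule embed0_ulie[OF Yu])
      note eb = embed0_blocks[OF Yc]
      define A where "A = commutator (embed0 n Y) p"
      have br: "mat n n (\<lambda>(i,j). A $$ (Suc i, Suc j)) = commutator Y M"
        using BLK(1)[OF Eu] zero_x_blocks[OF zc comm_carrier[OF Yc Mc]] unfolding A_def eb by simp
      have bl: "mat n 1 (\<lambda>(i,j). A $$ (Suc i, 0)) = Y * z"
        using BLK(2)[OF Eu] zero_x_bl[OF zc Mc Yc] unfolding A_def eb by simp
      have A00: "A $$ (0,0) = 0" using BLK(3)[OF Eu] zero_x_00[OF zc] unfolding A_def eb by simp
      have "A \<in> omega_orth n p (tangent_Korbit n p) \<longleftrightarrow> commutator Y M = 0\<^sub>m n n"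
      proof
        assume "A \<in> omega_orth n p (tangent_Korbit n p)"
        then have "mat n n (\<lambda>(i,j). A $$ (Suc i, Suc j)) = 0\<^sub>m n n" using CH[of A] by blast
        then show "commutator Y M = 0\<^sub>m n n" using br by simp
      next
        assume "commutator Y M = 0\<^sub>m n n"
        then have h: "mat n n (\<lambda>(i,j). A $$ (Suc i, Suc j)) = 0\<^sub>m n n" using br by simp
        have "\<exists>X1 \<in> unitary_lie (n + 1). A = commutator X1 p" using Eu unfolding A_def by blast
        then show "A \<in> omega_orth n p (tangent_Korbit n p)" using CH[of A] h by blast
      qed
      moreover have "A = offdiag_block n (Y * z)" if YM: "commutator Y M = 0\<^sub>m n n"
      proof -
        have "A = offdiag_block n (mat n 1 (\<lambda>(i,j). A $$ (Suc i, 0)))"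
          unfolding A_def by (rule reconstruct[OF BLK(4)[OF Eu] BLK(5)[OF Eu]]) (use A00 br YM in \<open>simp_all add: A_def\<close>)
        then show ?thesis using bl by simp
      qed
      ultimately show ?thesis unfolding A_def by blast
    qed
    show ?thesis
    proof
      show "?L \<subseteq> ?R"
      proof
        fix A assume A: "A \<in> ?L"
        then obtain Y where Yu: "Y \<in> unitary_lie n" and AY: "A = commutator (embed0 n Y) p"
          unfolding tangent_Korbit_def by blast
        have "commutator Y M = 0\<^sub>m n n" using key[OF Yu] A AY by blast
        moreover then have "A = offdiag_block n (Y * z)" using key[OF Yu] AY by blast
        ultimately show "A \<in> ?R" using Yu by blast
      qed
    next
      show "?R \<subseteq> ?L"
      proof
        fix A assume "A \<in> ?R"
        then obtain Y where Yu: "Y \<in> unitary_lie n" and YM: "commutator Y M = 0\<^sub>m n n"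
          and AY: "A = offdiag_block n (Y * z)" by blast
        have "A = commutator (embed0 n Y) p" using key[OF Yu] YM AY by simp
        moreover have "commutator (embed0 n Y) p \<in> tangent_Korbit n p"
          unfolding tangent_Korbit_def using Yu by blast
        ultimately show "A \<in> ?L" using key[OF Yu] YM by blast
      qed
    qed
  qed
  show ?thesis using P1 P2 by blast
qed
end
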